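(* Let $\Omega\subset\mathbb{R}^n$ be a bounded domain with the uniform $C^1$-regularity property, $\Delta t>0$, $V=W^3(\mathrm{div};\Omega)$, $Q=L^{3/2}(\Omega)$. Let $f^k\in L^3(\Omega)$, $S_b^k\in W^{1/3,3/2}(\partial\Omega)$, $S^{k-1}\in L^{3/2}(\Omega)$, and $\phi,\alpha^k,\beta^k,\gamma^k,\gamma^{k-1}\in L^\infty(\Omega)$ with $0<\underline{\phi}\le\phi\le\overline{\phi}<\infty$, $0<\underline{\alpha}\le\alpha^k\le\overline{\alpha}<\infty$, $0<\underline{\beta}\le\beta^k\le\overline{\beta}<\infty$, $0<\underline{\gamma}\le\gamma^k,\gamma^{k-1}\le\overline{\gamma}<\infty$ a.e. For $\varepsilon>0$ let $(\mathbf{m}_\varepsilon,S_\varepsilon)\in V\times Q$ be the unique solution of $$\int_\Omega(\alpha^k+\beta^k|\mathbf{m}_\varepsilon|)(\mathbf{m}_\varepsilon\cdot\mathbf{v})\,d\mathbf{x}+\varepsilon\int_\Omega|\mathrm{div}\,\mathbf{m}_\varepsilon|\,\mathrm{div}\,\mathbf{m}_\varepsilon\,\mathrm{div}\,\mathbf{v}\,d\mathbf{x}-\int_\Omega\mathrm{div}(\mathbf{v})S_\varepsilon\,d\mathbf{x}=-\int_{\partial\Omega}S_b^k(\mathbf{v}\cdot\mathbf{n})\,d\sigma\quad\forall\mathbf{v}\in V,$$ $$\int_\Omega\frac{\phi\gamma^k}{\Delta t}\frac{S_\varepsilon}{\sqrt{|S_\varepsilon|}}q\,d\mathbf{x}+\int_\Omega\mathrm{div}(\mathbf{m}_\varepsilon)q\,d\mathbf{x}=\int_\Omega\Big(f^k+\frac{\phi\gamma^{k-1}}{\Delta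 t}\frac{S^{k-1}}{\sqrt{|S^{k-1}|}}\Big)q\,d\mathbf{x}\quad\forall q\in Q.$$ Then there exist constants $\mathcal{K}_{\mathbf{m}},\mathcal{K}_S$, independent of $\varepsilon$, such that $\|\mathbf{m}_\varepsilon\|_V\le\mathcal{K}_{\mathbf{m}}$ and $\|S_\varepsilon\|_Q\le\mathcal{K}_S$ for every $\varepsilon>0$.
   Context: $W^3(\mathrm{div};\Omega):=\{\mathbf{v}\in(L^3(\Omega))^n:\mathrm{div}(\mathbf{v})\in L^3(\Omega)\}$ with norm $\|\mathbf{v}\|_V=(\|\mathbf{v}\|_{L^3}^3+\|\mathrm{div}\,\mathbf{v}\|_{L^3}^3)^{1/3}$; $\|\cdot\|_Q$ is the $L^{3/2}$ norm. The normal trace $\mathbf{v}\cdot\mathbf{n}$ lies in $(W^{1/3,3/2}(\partial\Omega))'$ and the boundary integral denotes the duality pairing. $p/\sqrt{|p|}:=0$ where $p=0$. *)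

theory Defs
  imports "HOL-Analysis.Analysis"
begin

definition Lp :: "real \<Rightarrow> (real^'n) set \<Rightarrow> (real^'n \<Rightarrow> real) set" where
  "Lp p \<Omega> = {f. set_borel_measurable lebesgue \<Omega> f \<and>
                 set_integrable lebesgue \<Omega> (\<lambda>x. \<bar>f x\<bar> powr p)}"

definition Lp_vec :: "real \<Rightarrow> (real^'n) set \<Rightarrow> (real^'n \<Rightarrow> real^'n) set" where
  "Lp_vec p \<Omega> = {v. set_borel_measurable lebesgue \<Omega> v \<and>
                     set_integrable lebesgue \<Omega> (\<lambda>x. norm (v x) powr p)}"

definition Lp_norm :: "real \<Rightarrow> (real^'n) set \<Rightarrow> (real^'n \<Rightarrow> real) \<Rightarrow> real" where
  "Lp_norm p \<Omega> f = (LINT x:\<Omega>|lebesgue. \<bar>f x\<bar> powr p) powr (1 / p)"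

definition ess_bounded_between :: "(real^'n) set \<Rightarrow> real \<Rightarrow> real \<Rightarrow> (real^'n \<Rightarrow> real) \<Rightarrow> bool" where
  "ess_bounded_between \<Omega> lo hi c \<longleftrightarrow> set_borel_measurable lebesgue \<Omega> c \<and>
     (AE x in lebesgue. x \<in> \<Omega> \<longrightarrow> lo \<le> c x \<and> c x \<le> hi)"

definition pd :: "'n::finite \<Rightarrow> (real^'n \<Rightarrow> real) \<Rightarrow> real^'n \<Rightarrow> real" where
  "pd i f x = frechet_derivative f (at x) (axis i 1)"

fun iter_pd :: "'n::finite list \<Rightarrow> (real^'n \<Rightarrow> real) \<Rightarrow> real^'n \<Rightarrow> real" where
  "iter_pd [] f = f"
| "iter_pd (i # is) f = pd i (iter_pd is f)"

definition smooth :: "(real^'n::finite \<Rightarrow> real) \<Rightarrow> bool" where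
  "smooth f \<longleftrightarrow> (\<forall>is x. iter_pd is f differentiable (at x))"

definition test_fun :: "(real^'n::finite) set \<Rightarrow> (real^'n \<Rightarrow> real) \<Rightarrow> bool" where
  "test_fun \<Omega> \<phi> \<longleftrightarrow> smooth \<phi> \<and> compact (closure {x. \<phi> x \<noteq> 0})
                        \<and> closure {x. \<phi> x \<noteq> 0} \<subseteq> \<Omega>"

definition is_weak_div :: "(real^'n::finite) set \<Rightarrow> (real^'n \<Rightarrow> real^'n) \<Rightarrow> (real^'n \<Rightarrow> real) \<Rightarrow> bool" where
  "is_weak_div \<Omega> v d \<longleftrightarrow> (\<forall>\<phi>. test_fun \<Omega> \<phi> \<longrightarrow>
     (LINT x:\<Omega>|lebesgue. (\<Sum>i\<in>UNIV. v x $ i * pd i \<phi> x)) = - (LINT x:\<Omega>|lebesgue. d x * \<phi> x))"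

definition is_weak_grad :: "(real^'n::finite) set \<Rightarrow> (real^'n \<Rightarrow> real) \<Rightarrow> (real^'n \<Rightarrow> real^'n) \<Rightarrow> bool" where
  "is_weak_grad \<Omega> u g \<longleftrightarrow> (\<forall>\<phi> i. test_fun \<Omega> \<phi> \<longrightarrow>
     (LINT x:\<Omega>|lebesgue. u x * pd i \<phi> x) = - (LINT x:\<Omega>|lebesgue. g x $ i * \<phi> x))"

definition Wdiv3 :: "(real^'n::finite) set \<Rightarrow> (real^'n \<Rightarrow> real^'n) set" where
  "Wdiv3 \<Omega> = {v. v \<in> Lp_vec 3 \<Omega> \<and> (\<exists>d. d \<in> Lp 3 \<Omega> \<and> is_weak_div \<Omega> v d)}"

definition wdiv :: "(real^'n::finite) set \<Rightarrow> (real^'n \<Rightarrow> real^'n) \<Rightarrow> real^'n \<Rightarrow> real" where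
  "wdiv \<Omega> v = (SOME d. d \<in> Lp 3 \<Omega> \<and> is_weak_div \<Omega> v d)"

definition Wdiv3_norm :: "(real^'n::finite) set \<Rightarrow> (real^'n \<Rightarrow> real^'n) \<Rightarrow> real" where
  "Wdiv3_norm \<Omega> v = ((LINT x:\<Omega>|lebesgue. norm (v x) powr 3)
                      + (LINT x:\<Omega>|lebesgue. \<bar>wdiv \<Omega> v x\<bar> powr 3)) powr (1/3)"

definition W1p :: "real \<Rightarrow> (real^'n::finite) set \<Rightarrow> (real^'n \<Rightarrow> real) set" where
  "W1p p \<Omega> = {u. u \<in> Lp p \<Omega> \<and> (\<exists>g. g \<in> Lp_vec p \<Omega> \<and> is_weak_grad \<Omega> u g)}"

definition wgrad :: "real \<Rightarrow> (real^'n::finite) set \<Rightarrow> (real^'n \<Rightarrow> real) \<Rightarrow> real^'n \<Rightarrow> real^'n" where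
  "wgrad p \<Omega> u = (SOME g. g \<in> Lp_vec p \<Omega> \<and> is_weak_grad \<Omega> u g)"

text \<open>Duality pairing of the normal trace of v with the boundary datum trace(G),
  where G in W^{1,3/2}(Omega) is a lifting of the datum in W^{1/3,3/2}(boundary).
  This is the Green-formula definition of the normal trace pairing.\<close>
definition normal_trace_pairing :: "(real^'n::finite) set \<Rightarrow> (real^'n \<Rightarrow> real) \<Rightarrow> (real^'n \<Rightarrow> real^'n) \<Rightarrow> real" where
  "normal_trace_pairing \<Omega> G v =
     (LINT x:\<Omega>|lebesgue. v x \<bullet> wgrad (3/2) \<Omega> G x) + (LINT x:\<Omega>|lebesgue. wdiv \<Omega> v x * G x)"

definition sroot :: "real \<Rightarrow> real" where
  "sroot p = (if p = 0 then 0 else p / sqrt \<bar>p\<bar>)"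

section \<open>Uniform C^1-regularity (Adams, Sobolev Spaces, 4.10, m = 1)\<close>

definition C1_map_on :: "(real^'n::finite) set \<Rightarrow> (real^'n \<Rightarrow> real^'n) \<Rightarrow> bool" where
  "C1_map_on S F \<longleftrightarrow> (\<forall>x\<in>S. F differentiable (at x)) \<and>
     (\<forall>l. continuous_on S (\<lambda>x. frechet_derivative F (at x) (axis l 1)))"

definition C1_bounded_by :: "(real^'n::finite) set \<Rightarrow> real \<Rightarrow> (real^'n \<Rightarrow> real^'n) \<Rightarrow> bool" where
  "C1_bounded_by S M F \<longleftrightarrow> (\<forall>x\<in>S. \<forall>i l. \<bar>F x $ i\<bar> \<le> M \<and>
       \<bar>frechet_derivative F (at x) (axis l 1) $ i\<bar> \<le> M)"

definition uniform_C1_regular :: "(real^'n::finite) set \<Rightarrow> bool" where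
  "uniform_C1_regular \<Omega> \<longleftrightarrow>
    (\<exists>(J::nat set) U \<Phi> \<delta> R M k.
       (\<forall>j\<in>J. open (U j)) \<and> frontier \<Omega> \<subseteq> (\<Union>j\<in>J. U j) \<and>
       (\<forall>x. \<exists>e>0. finite {j\<in>J. U j \<inter> ball x e \<noteq> {}}) \<and>
       (\<forall>j\<in>J. bij_betw (\<Phi> j) (U j) (ball 0 1) \<and>
               C1_map_on (U j) (\<Phi> j) \<and> C1_map_on (ball 0 1) (inv_into (U j) (\<Phi> j)) \<and>
               \<Phi> j ` (U j \<inter> \<Omega>) = {y \<in> ball 0 1. y $ k > 0} \<and>
               C1_bounded_by (U j) M (\<Phi> j) \<and>
               C1_bounded_by (ball 0 1) M (inv_into (U j) (\<Phi> j))) \<and>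
       \<delta> > 0 \<and>
       {x \<in> \<Omega>. infdist x (frontier \<Omega>) < \<delta>} \<subseteq> (\<Union>j\<in>J. inv_into (U j) (\<Phi> j) ` ball 0 (1/2)) \<and>
       (\<forall>F\<subseteq>J. finite F \<and> card F = Suc R \<longrightarrow> (\<Inter>j\<in>F. U j) = {}))"

end

theory Submission imports Defs begin

lemma young1:
  fixes x y l :: real assumes "0 \<le> x" "0 \<le> y" "0 < l"
  shows "x * y \<le> l * (y * sqrt y) + x^3 / l^2"
proof (cases "x \<le> l * sqrt y")
  case True
  then have "x*y \<le> l * sqrt y * y" using assms by (simp add: mult_right_mono)
  moreover have "0 \<le> x^3/l^2" using assms by simp
  ultimately show ?thesis by (simp add: algebra_simps)
next
  case False
  then have "sqrt y < x / l" using assms by (simp add: field_simps)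
  then have "(sqrt y)^2 < (x/l)^2" using assms by (intro power_strict_mono) auto
  then have "y < (x/l)^2" using assms by simp
  then have "x*y \<le> x*(x/l)^2" using assms by (intro mult_left_mono) auto
  also have "\<dots> = x^3/l^2" by (simp add: power2_eq_square power3_eq_cube field_simps)
  finally have "x*y \<le> x^3/l^2" .
  moreover have "0 \<le> l * (y * sqrt y)" using assms by simp
  ultimately show ?thesis by linarith
qed

lemma powr3: "\<bar>t::real\<bar> powr 3 = \<bar>t\<bar>^3"
  by (cases "t = 0") (auto simp: powr_realpow)

lemma powr3n: "(norm t) powr 3 = (norm t)^3"
  by (cases "t = 0") (auto simp: powr_realpow)

lemma powr32: "(u::real) \<ge> 0 \<Longrightarrow> u powr (3/2) = u * sqrt u"
proof (cases "u = 0")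
  case False
  assume "u \<ge> 0"
  then have "u powr (3/2) = u powr (1 + 1/2)" by simp
  also have "\<dots> = u powr 1 * u powr (1/2)" by (rule powr_add)
  also have "\<dots> = u * sqrt u" using \<open>u\<ge>0\<close> False by (simp add: powr_half_sqrt)
  finally show ?thesis .
qed simp

lemma sroot_eq: "sroot p = p / sqrt \<bar>p\<bar>"
  by (simp add: sroot_def)

lemma sroot_abs: "\<bar>sroot p\<bar> = sqrt \<bar>p\<bar>"
  by (cases "p = 0") (auto simp: sroot_def abs_div real_sqrt_abs2 field_simps)

lemma sroot_mult: "sroot p * p = \<bar>p\<bar> * sqrt \<bar>p\<bar>"
proof (cases "p = 0")
  case False
  have q: "0 < sqrt \<bar>p\<bar>" using False by simp
  have e: "p * p = \<bar>p\<bar> * (sqrt \<bar>p\<bar> * sqrt \<bar>p\<bar>)" by (simp add: abs_mult_self_eq)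
  have "sroot p * p = (p * p) / sqrt \<bar>p\<bar>" by (simp add: sroot_eq)
  also have "\<dots> = (\<bar>p\<bar> * sqrt \<bar>p\<bar>) * sqrt \<bar>p\<bar> / sqrt \<bar>p\<bar>" by (simp only: e mult.assoc)
  also have "\<dots> = \<bar>p\<bar> * sqrt \<bar>p\<bar>" using q by simp
  finally show ?thesis .
qed (simp add: sroot_def)

lemma cube_sum: "0 \<le> (p::real) \<Longrightarrow> 0 \<le> q \<Longrightarrow> (p+q)^3 \<le> 4*(p^3+q^3)"
proof -
  assume "0 \<le> p" "0 \<le> q"
  have "4*(p^3+q^3) - (p+q)^3 = 3*(p+q)*(p-q)^2"
    by (simp add: power2_eq_square power3_eq_cube algebra_simps)
  moreover have "0 \<le> 3*(p+q)*(p-q)^2" using \<open>0 \<le> p\<close> \<open>0 \<le> q\<close> by simp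
  ultimately show ?thesis by linarith
qed

lemma bound_int:
  fixes u F :: "'a \<Rightarrow> real"
  assumes "integrable M F" "u \<in> borel_measurable M" "AE x in M. \<bar>u x\<bar> \<le> F x"
  shows "integrable M u" "integral\<^sup>L M u \<le> integral\<^sup>L M F" "- integral\<^sup>L M u \<le> integral\<^sup>L M F"
proof -
  show iu: "integrable M u"
    by (rule Bochner_Integration.integrable_bound[OF assms(1,2)]) (use assms(3) in \<open>auto elim!: eventually_mono\<close>)
  show "integral\<^sup>L M u \<le> integral\<^sup>L M F"
    by (rule integral_mono_AE[OF iu assms(1)]) (use assms(3) in \<open>auto elim!: eventually_mono\<close>)
  have "integral\<^sup>L M (\<lambda>x. - u x) \<le> integral\<^sup>L M F"
    by (rule integral_mono_AE[OF _ assms(1)]) (use assms(3) iu in \<open>auto elim!: eventually_mono\<close>)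
  then show "- integral\<^sup>L M u \<le> integral\<^sup>L M F" by simp
qed


lemma sbm_N:
  fixes f :: "'a \<Rightarrow> 'b::real_normed_vector"
  assumes "\<Omega> \<in> sets M"
  shows "set_borel_measurable M \<Omega> f \<longleftrightarrow> f \<in> borel_measurable (restrict_space M \<Omega>)"
proof -
  have "\<Omega> \<inter> space M = \<Omega>" using sets.sets_into_space[OF assms] by auto
  then show ?thesis unfolding set_borel_measurable_def
    by (subst borel_measurable_restrict_space_iff) (auto simp: assms)
qed

lemma si_N:
  fixes f :: "'a \<Rightarrow> 'b::{banach, second_countable_topology}"
  assumes "\<Omega> \<in> sets M"
  shows "set_integrable M \<Omega> f \<longleftrightarrow> integrable (restrict_space M \<Omega>) f"
proof -
  have "\<Omega> \<inter> space M = \<Omega>" using sets.sets_into_space[OF assms] by auto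
  then show ?thesis by (intro set_integrable_eq) (simp add: assms)
qed

lemma sl_N:
  fixes f :: "'a \<Rightarrow> 'b::{banach, second_countable_topology}"
  assumes "\<Omega> \<in> sets M"
  shows "set_lebesgue_integral M \<Omega> f = integral\<^sup>L (restrict_space M \<Omega>) f"
proof -
  have "\<Omega> \<inter> space M = \<Omega>" using sets.sets_into_space[OF assms] by auto
  then show ?thesis unfolding set_lebesgue_integral_def
    by (subst integral_restrict_space) (simp_all add: assms)
qed

lemma AE_N:
  assumes "\<Omega> \<in> sets M"
  shows "(AE x in restrict_space M \<Omega>. P x) \<longleftrightarrow> (AE x in M. x \<in> \<Omega> \<longrightarrow> P x)"
proof -
  have "\<Omega> \<inter> space M = \<Omega>" using sets.sets_into_space[OF assms] by auto
  then show ?thesis by (intro AE_restrict_space_iff) (simp add: assms)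
qed

lemma prod_bounds:
  fixes a x b c y e t :: real
  assumes "0<a" "a \<le> x" "x \<le> b" "0 < c" "c \<le> y" "y \<le> e" "0 < t"
  shows "a*c/t \<le> x*y/t \<and> x*y/t \<le> b*e/t"
proof -
  have "a*c \<le> x*y" using assms by (intro mult_mono) auto
  moreover have "x*y \<le> b*e" using assms by (intro mult_mono) auto
  ultimately show ?thesis using assms by (auto intro: divide_right_mono)
qed

lemma sq_le: "0 \<le> (a::real) \<Longrightarrow> a^2 \<le> 1 + a^3"
proof (cases "a \<le> 1")
  case True
  assume "0 \<le> a"
  then have "a^2 \<le> 1" using True by (simp add: power_le_one)
  moreover have "0 \<le> a^3" using \<open>0 \<le> a\<close> by simp
  ultimately show ?thesis by linarith
next
  case False
  then have "a^2 \<le> a^3" by (simp add: power_increasing)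
  then show ?thesis by simp
qed

lemma coef_bound:
  fixes al be alo ahi blo bhi a :: real
  assumes "0 < alo" "alo \<le> al" "al \<le> ahi" "0 < blo" "blo \<le> be" "be \<le> bhi" "0 \<le> a"
  shows "\<bar>(al + be*a)*a^2\<bar> \<le> ahi + (ahi+bhi)*a^3 \<and> blo*a^3 \<le> (al+be*a)*a^2"
proof -
  have nn: "0 \<le> (al + be*a)*a^2" using assms by simp
  have "(al + be*a)*a^2 = al*a^2 + be*a^3" by (simp add: power2_eq_square power3_eq_cube algebra_simps)
  also have "\<dots> \<le> ahi*a^2 + bhi*a^3" using assms by (intro add_mono mult_right_mono) auto
  also have "\<dots> \<le> ahi*(1+a^3) + bhi*a^3" using assms sq_le[of a] by (intro add_mono mult_left_mono) auto
  finally have 1: "\<bar>(al + be*a)*a^2\<bar> \<le> ahi + (ahi+bhi)*a^3" using nn by (simp add: algebra_simps)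
  have "blo*a^3 \<le> be*a^3" using assms by (intro mult_right_mono) auto
  also have "\<dots> \<le> al*a^2 + be*a^3" using assms by simp
  also have "\<dots> = (al + be*a)*a^2" by (simp add: power2_eq_square power3_eq_cube algebra_simps)
  finally show ?thesis using 1 by simp
qed

lemma sqrt_cube: "0 \<le> (t::real) \<Longrightarrow> (sqrt t)^3 = t * sqrt t"
  by (simp add: power3_eq_cube)

lemma cube_abs: "(t::real) * (\<bar>t\<bar> * t) = \<bar>t\<bar>^3"
  by (cases "t \<ge> 0") (simp_all add: power3_eq_cube)

lemma sq_sqrt_abs: "\<bar>t::real\<bar>^2 * sqrt (\<bar>t\<bar>^2) = \<bar>t\<bar>^3"
  by (simp add: power2_eq_square power3_eq_cube)

lemma cw_bound:
  fixes c lo hi w :: real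
  assumes "0 \<le> c" "lo \<le> c" "c \<le> hi" "0 \<le> w"
  shows "\<bar>c*w\<bar> \<le> hi*w \<and> lo*w \<le> c*w"
  using assms by (auto simp: abs_mult intro: mult_right_mono)

lemma inv_sq:
  fixes l c :: real
  assumes "1 \<le> l" "c \<le> l" "0 < c"
  shows "1 / l^2 \<le> 1 / c"
proof -
  have "l \<le> l^2" using assms(1) by (simp add: power2_eq_square)
  then have "1 / l^2 \<le> 1 / l" using assms by (intro divide_left_mono) auto
  also have "\<dots> \<le> 1 / c" using assms by (intro divide_left_mono) auto
  finally show ?thesis .
qed

theorem proposition2p3:
  fixes \<Omega> :: "(real^'n::finite) set"
    and dt :: real
    and f Sprev \<phi> \<alpha> \<beta> \<gamma> \<gamma>prev :: "real^'n \<Rightarrow> real"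
    and Sb :: "real^'n \<Rightarrow> real"
    and \<phi>lo \<phi>hi \<alpha>lo \<alpha>hi \<beta>lo \<beta>hi \<gamma>lo \<gamma>hi :: real
    and m :: "real \<Rightarrow> real^'n \<Rightarrow> real^'n"
    and S :: "real \<Rightarrow> real^'n \<Rightarrow> real"
  assumes "open \<Omega>" and "connected \<Omega>" and "bounded \<Omega>" and "uniform_C1_regular \<Omega>"
    and "dt > 0"
    and "f \<in> Lp 3 \<Omega>"
    and "Sb \<in> W1p (3/2) \<Omega>"
    and "Sprev \<in> Lp (3/2) \<Omega>"
    and "0 < \<phi>lo" "\<phi>lo \<le> \<phi>hi" "ess_bounded_between \<Omega> \<phi>lo \<phi>hi \<phi>"
    and "0 < \<alpha>lo" "\<alpha>lo \<le> \<alpha>hi" "ess_bounded_between \<Omega> \<alpha>lo \<alpha>hi \<alpha>"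
    and "0 < \<beta>lo" "\<beta>lo \<le> \<beta>hi" "ess_bounded_between \<Omega> \<beta>lo \<beta>hi \<beta>"
    and "0 < \<gamma>lo" "\<gamma>lo \<le> \<gamma>hi" "ess_bounded_between \<Omega> \<gamma>lo \<gamma>hi \<gamma>"
    "ess_bounded_between \<Omega> \<gamma>lo \<gamma>hi \<gamma>prev"
    and sol: "\<And>\<epsilon>. \<epsilon> > 0 \<Longrightarrow>
       m \<epsilon> \<in> Wdiv3 \<Omega> \<and> S \<epsilon> \<in> Lp (3/2) \<Omega> \<and>
       (\<forall>v\<in>Wdiv3 \<Omega>.
          (LINT x:\<Omega>|lebesgue. (\<alpha> x + \<beta> x * norm (m \<epsilon> x)) * (m \<epsilon> x \<bullet> v x))
          + \<epsilon> * (LINT x:\<Omega>|lebesgue. \<bar>wdiv \<Omega> (m \<epsilon>) x\<bar> * wdiv \<Omega> (m \<epsilon>) x * wdiv \<Omega> v x)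
          - (LINT x:\<Omega>|lebesgue. wdiv \<Omega> v x * S \<epsilon> x)
          = - normal_trace_pairing \<Omega> Sb v) \<and>
       (\<forall>q\<in>Lp (3/2) \<Omega>.
          (LINT x:\<Omega>|lebesgue. \<phi> x * \<gamma> x / dt * sroot (S \<epsilon> x) * q x)
          + (LINT x:\<Omega>|lebesgue. wdiv \<Omega> (m \<epsilon>) x * q x)
          = (LINT x:\<Omega>|lebesgue. (f x + \<phi> x * \<gamma>prev x / dt * sroot (Sprev x)) * q x))"
  shows "\<exists>Km KS. \<forall>\<epsilon>>0. Wdiv3_norm \<Omega> (m \<epsilon>) \<le> Km \<and> Lp_norm (3/2) \<Omega> (S \<epsilon>) \<le> KS"
proof -
  note opn = assms(1) and bnd = assms(3) and dtp = assms(5)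
  define N where "N = restrict_space lebesgue \<Omega>"
  have "\<Omega> \<in> lmeasurable" using lmeasurable_open[OF bnd opn] .
  then have OmS: "\<Omega> \<in> sets lebesgue" and OmF: "emeasure lebesgue \<Omega> < \<infinity>"
    by (auto simp: fmeasurable_def)
  have finN: "finite_measure N" unfolding N_def
    by (intro finite_measureI) (use OmS OmF in \<open>simp add: space_restrict_space emeasure_restrict_space\<close>)
  have LI: "\<And>F::_\<Rightarrow>real. set_lebesgue_integral lebesgue \<Omega> F = integral\<^sup>L N F"
    unfolding N_def by (rule sl_N[OF OmS])
  have SI: "\<And>F::_\<Rightarrow>real. set_integrable lebesgue \<Omega> F \<longleftrightarrow> integrable N F"
    unfolding N_def by (rule si_N[OF OmS])
  have SB: "\<And>F::_\<Rightarrow>real. set_borel_measurable lebesgue \<Omega> F \<longleftrightarrow> F \<in> borel_measurable N"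
    unfolding N_def by (rule sbm_N[OF OmS])
  have SBv: "\<And>F::_\<Rightarrow>real^'n. set_borel_measurable lebesgue \<Omega> F \<longleftrightarrow> F \<in> borel_measurable N"
    unfolding N_def by (rule sbm_N[OF OmS])
  have AEN: "\<And>P. (AE x in N. P x) \<longleftrightarrow> (AE x in lebesgue. x \<in> \<Omega> \<longrightarrow> P x)"
    unfolding N_def by (rule AE_N[OF OmS])
  have ic: "\<And>c::real. integrable N (\<lambda>x. c)" using finite_measure.integrable_const[OF finN] .

  have ebb: "\<And>lo hi c. ess_bounded_between \<Omega> lo hi c \<Longrightarrow> c \<in> borel_measurable N \<and> (AE x in N. lo \<le> c x \<and> c x \<le> hi)"
    unfolding ess_bounded_between_def using SB AEN by auto
  have mphi[measurable]: "\<phi> \<in> borel_measurable N" and mal[measurable]: "\<alpha> \<in> borel_measurable N"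
   and mbe[measurable]: "\<beta> \<in> borel_measurable N" and mga[measurable]: "\<gamma> \<in> borel_measurable N"
   and mgp[measurable]: "\<gamma>prev \<in> borel_measurable N"
    using ebb[OF assms(11)] ebb[OF assms(14)] ebb[OF assms(17)] ebb[OF assms(20)] ebb[OF assms(21)] by auto
  define clo where "clo = \<phi>lo * \<gamma>lo / dt"
  define chi where "chi = \<phi>hi * \<gamma>hi / dt"
  have clo_pos: "0 < clo" unfolding clo_def using assms(9,18) dtp by simp
  have clo_chi: "clo \<le> chi" unfolding clo_def chi_def
    using prod_bounds[of \<phi>lo \<phi>lo \<phi>hi \<gamma>lo \<gamma>lo \<gamma>hi dt] assms(9,10,18,19) dtp by auto
  have chi_pos: "0 < chi" using clo_pos clo_chi by simp
  have AEc: "AE x in N. clo \<le> \<phi> x * \<gamma> x / dt \<and> \<phi> x * \<gamma> x / dt \<le> chi \<and>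
       clo \<le> \<phi> x * \<gamma>prev x / dt \<and> \<phi> x * \<gamma>prev x / dt \<le> chi \<and>
       \<alpha>lo \<le> \<alpha> x \<and> \<alpha> x \<le> \<alpha>hi \<and> \<beta>lo \<le> \<beta> x \<and> \<beta> x \<le> \<beta>hi"
  proof -
    have "AE x in N. (\<phi>lo \<le> \<phi> x \<and> \<phi> x \<le> \<phi>hi) \<and> (\<gamma>lo \<le> \<gamma> x \<and> \<gamma> x \<le> \<gamma>hi) \<and>
       (\<gamma>lo \<le> \<gamma>prev x \<and> \<gamma>prev x \<le> \<gamma>hi) \<and> (\<alpha>lo \<le> \<alpha> x \<and> \<alpha> x \<le> \<alpha>hi) \<and> (\<beta>lo \<le> \<beta> x \<and> \<beta> x \<le> \<beta>hi)"
      using ebb[OF assms(11)] ebb[OF assms(14)] ebb[OF assms(17)] ebb[OF assms(20)] ebb[OF assms(21)]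
      by (auto simp del: AE_conj_iff intro!: AE_conjI)
    then show ?thesis
    proof (rule eventually_mono)
      fix x assume h: "(\<phi>lo \<le> \<phi> x \<and> \<phi> x \<le> \<phi>hi) \<and> (\<gamma>lo \<le> \<gamma> x \<and> \<gamma> x \<le> \<gamma>hi) \<and>
       (\<gamma>lo \<le> \<gamma>prev x \<and> \<gamma>prev x \<le> \<gamma>hi) \<and> (\<alpha>lo \<le> \<alpha> x \<and> \<alpha> x \<le> \<alpha>hi) \<and> (\<beta>lo \<le> \<beta> x \<and> \<beta> x \<le> \<beta>hi)"
      show "clo \<le> \<phi> x * \<gamma> x / dt \<and> \<phi> x * \<gamma> x / dt \<le> chi \<and>
       clo \<le> \<phi> x * \<gamma>prev x / dt \<and> \<phi> x * \<gamma>prev x / dt \<le> chi \<and>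
       \<alpha>lo \<le> \<alpha> x \<and> \<alpha> x \<le> \<alpha>hi \<and> \<beta>lo \<le> \<beta> x \<and> \<beta> x \<le> \<beta>hi"
        using h prod_bounds[of \<phi>lo "\<phi> x" \<phi>hi \<gamma>lo "\<gamma> x" \<gamma>hi dt]
          prod_bounds[of \<phi>lo "\<phi> x" \<phi>hi \<gamma>lo "\<gamma>prev x" \<gamma>hi dt] assms(9,18) dtp
        unfolding clo_def chi_def by auto
    qed
  qed

  have mf[measurable]: "f \<in> borel_measurable N" and if3: "integrable N (\<lambda>x. \<bar>f x\<bar>^3)"
    using assms(6) unfolding Lp_def SB SI powr3 by auto
  have mP[measurable]: "Sprev \<in> borel_measurable N" and iP: "integrable N (\<lambda>x. \<bar>Sprev x\<bar> * sqrt \<bar>Sprev x\<bar>)"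
    using assms(8) unfolding Lp_def SB SI by (auto simp: powr32)
  define h where "h = wgrad (3/2) \<Omega> Sb"
  have SbL: "Sb \<in> Lp (3/2) \<Omega>" and exg: "\<exists>g. g \<in> Lp_vec (3/2) \<Omega> \<and> is_weak_grad \<Omega> Sb g"
    using assms(7) unfolding W1p_def by auto
  have "h \<in> Lp_vec (3/2) \<Omega> \<and> is_weak_grad \<Omega> Sb h" unfolding h_def wgrad_def by (rule someI_ex[OF exg])
  then have mh[measurable]: "h \<in> borel_measurable N" and ih: "integrable N (\<lambda>x. norm (h x) * sqrt (norm (h x)))"
    unfolding Lp_vec_def SBv SI by (auto simp: powr32)
  have mG[measurable]: "Sb \<in> borel_measurable N" and iG: "integrable N (\<lambda>x. \<bar>Sb x\<bar> * sqrt \<bar>Sb x\<bar>)"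
    using SbL unfolding Lp_def SB SI by (auto simp: powr32)
  define g where "g = (\<lambda>x. f x + \<phi> x * \<gamma>prev x / dt * sroot (Sprev x))"
  have mg[measurable]: "g \<in> borel_measurable N" unfolding g_def sroot_eq by measurable
  have ig3: "integrable N (\<lambda>x. \<bar>g x\<bar>^3)"
  proof (rule bound_int(1))
    show "integrable N (\<lambda>x. 4 * \<bar>f x\<bar>^3 + 4 * chi^3 * (\<bar>Sprev x\<bar> * sqrt \<bar>Sprev x\<bar>))"
      using if3 iP by auto
    show "(\<lambda>x. \<bar>g x\<bar>^3) \<in> borel_measurable N" by measurable
    show "AE x in N. \<bar>\<bar>g x\<bar>^3\<bar> \<le> 4 * \<bar>f x\<bar>^3 + 4 * chi^3 * (\<bar>Sprev x\<bar> * sqrt \<bar>Sprev x\<bar>)"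
      using AEc
    proof (rule eventually_mono)
      fix x assume h: "clo \<le> \<phi> x * \<gamma> x / dt \<and> \<phi> x * \<gamma> x / dt \<le> chi \<and>
       clo \<le> \<phi> x * \<gamma>prev x / dt \<and> \<phi> x * \<gamma>prev x / dt \<le> chi \<and>
       \<alpha>lo \<le> \<alpha> x \<and> \<alpha> x \<le> \<alpha>hi \<and> \<beta>lo \<le> \<beta> x \<and> \<beta> x \<le> \<beta>hi"
      have "\<bar>\<phi> x * \<gamma>prev x / dt * sroot (Sprev x)\<bar> = \<bar>\<phi> x * \<gamma>prev x / dt\<bar> * sqrt \<bar>Sprev x\<bar>"
        by (simp add: abs_mult sroot_abs)
      also have "\<dots> \<le> chi * sqrt \<bar>Sprev x\<bar>" using h clo_pos by (intro mult_right_mono) auto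
      finally have "\<bar>g x\<bar> \<le> \<bar>f x\<bar> + chi * sqrt \<bar>Sprev x\<bar>" unfolding g_def by linarith
      then have "\<bar>g x\<bar>^3 \<le> (\<bar>f x\<bar> + chi * sqrt \<bar>Sprev x\<bar>)^3" by (intro power_mono) auto
      also have "\<dots> \<le> 4 * (\<bar>f x\<bar>^3 + (chi * sqrt \<bar>Sprev x\<bar>)^3)" using chi_pos by (intro cube_sum) auto
      also have "(chi * sqrt \<bar>Sprev x\<bar>)^3 = chi^3 * (\<bar>Sprev x\<bar> * sqrt \<bar>Sprev x\<bar>)"
        by (simp add: power_mult_distrib sqrt_cube)
      finally show "\<bar>\<bar>g x\<bar>^3\<bar> \<le> 4 * \<bar>f x\<bar>^3 + 4 * chi^3 * (\<bar>Sprev x\<bar> * sqrt \<bar>Sprev x\<bar>)" by simp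
    qed
  qed

  define l1 where "l1 = clo / 4"
  define l2 where "l2 = 1 + 2 / \<beta>lo"
  define l3 where "l3 = 1 + 4 * chi / clo"
  define mu where "mu = 1 / (4 * (chi + 1))"
  define G3 where "G3 = integral\<^sup>L N (\<lambda>x. \<bar>g x\<bar>^3)"
  define H where "H = integral\<^sup>L N (\<lambda>x. norm (h x) * sqrt (norm (h x)))"
  define GG where "GG = integral\<^sup>L N (\<lambda>x. \<bar>Sb x\<bar> * sqrt \<bar>Sb x\<bar>)"
  define K0 where "K0 = G3 / l1^2 + l2 * H + (GG + G3) + chi * l3 * GG"
  define KA where "KA = 2 * K0 / \<beta>lo"
  define KB where "KB = 2 * K0 / clo"
  define KD where "KD = 2 * (16 * G3 + chi / mu^2 * KB)"
  have l1p: "0 < l1" and l2p: "0 < l2" and l3p: "0 < l3" and mup: "0 < mu"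
    using clo_pos assms(15) chi_pos unfolding l1_def l2_def l3_def mu_def by (auto intro!: add_pos_pos divide_pos_pos)
  have key: "integral\<^sup>L N (\<lambda>x. norm (m \<epsilon> x)^3) \<le> KA \<and>
      integral\<^sup>L N (\<lambda>x. \<bar>S \<epsilon> x\<bar> * sqrt \<bar>S \<epsilon> x\<bar>) \<le> KB \<and>
      integral\<^sup>L N (\<lambda>x. \<bar>wdiv \<Omega> (m \<epsilon>) x\<bar>^3) \<le> KD" if ep: "\<epsilon> > 0" for \<epsilon>
  proof -
    define mm where "mm = m \<epsilon>"
    define s where "s = S \<epsilon>"
    define d where "d = wdiv \<Omega> mm"
    have solE: "mm \<in> Wdiv3 \<Omega> \<and> s \<in> Lp (3/2) \<Omega> \<and>
       (\<forall>v\<in>Wdiv3 \<Omega>.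
          integral\<^sup>L N (\<lambda>x. (\<alpha> x + \<beta> x * norm (mm x)) * (mm x \<bullet> v x))
          + \<epsilon> * integral\<^sup>L N (\<lambda>x. \<bar>d x\<bar> * d x * wdiv \<Omega> v x)
          - integral\<^sup>L N (\<lambda>x. wdiv \<Omega> v x * s x)
          = - (integral\<^sup>L N (\<lambda>x. v x \<bullet> h x) + integral\<^sup>L N (\<lambda>x. wdiv \<Omega> v x * Sb x))) \<and>
       (\<forall>q\<in>Lp (3/2) \<Omega>.
          integral\<^sup>L N (\<lambda>x. \<phi> x * \<gamma> x / dt * sroot (s x) * q x)
          + integral\<^sup>L N (\<lambda>x. d x * q x)
          = integral\<^sup>L N (\<lambda>x. g x * q x))"
      using sol[OF ep] unfolding LI normal_trace_pairing_def mm_def s_def d_def h_def g_def .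
    have mW: "mm \<in> Wdiv3 \<Omega>" and sL: "s \<in> Lp (3/2) \<Omega>" using solE[THEN conjunct1] solE[THEN conjunct2, THEN conjunct1] by simp_all
    have "\<exists>d'. d' \<in> Lp 3 \<Omega> \<and> is_weak_div \<Omega> mm d'" using mW unfolding Wdiv3_def by auto
    then have "d \<in> Lp 3 \<Omega> \<and> is_weak_div \<Omega> mm d" unfolding d_def wdiv_def by (rule someI_ex)
    then have md[measurable]: "d \<in> borel_measurable N" and id3: "integrable N (\<lambda>x. \<bar>d x\<bar>^3)"
      unfolding Lp_def SB SI powr3 by auto
    have mmm[measurable]: "mm \<in> borel_measurable N" and ia3: "integrable N (\<lambda>x. norm (mm x)^3)"
      using mW unfolding Wdiv3_def Lp_vec_def SBv SI powr3n by auto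
    have ms[measurable]: "s \<in> borel_measurable N" and is32: "integrable N (\<lambda>x. \<bar>s x\<bar> * sqrt \<bar>s x\<bar>)"
      using sL unfolding Lp_def SB SI by (auto simp: powr32)
    have e1: "integral\<^sup>L N (\<lambda>x. (\<alpha> x + \<beta> x * norm (mm x)) * (mm x \<bullet> mm x))
          + \<epsilon> * integral\<^sup>L N (\<lambda>x. \<bar>d x\<bar> * d x * d x)
          - integral\<^sup>L N (\<lambda>x. d x * s x)
          = - (integral\<^sup>L N (\<lambda>x. mm x \<bullet> h x) + integral\<^sup>L N (\<lambda>x. d x * Sb x))"
      using bspec[OF solE[THEN conjunct2, THEN conjunct2, THEN conjunct1] mW] unfolding d_def by simp
    have e2: "integral\<^sup>L N (\<lambda>x. \<phi> x * \<gamma> x / dt * sroot (s x) * s x)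
          + integral\<^sup>L N (\<lambda>x. d x * s x) = integral\<^sup>L N (\<lambda>x. g x * s x)"
      using bspec[OF solE[THEN conjunct2, THEN conjunct2, THEN conjunct2] sL] by simp
    have e3: "integral\<^sup>L N (\<lambda>x. \<phi> x * \<gamma> x / dt * sroot (s x) * Sb x)
          + integral\<^sup>L N (\<lambda>x. d x * Sb x) = integral\<^sup>L N (\<lambda>x. g x * Sb x)"
      using bspec[OF solE[THEN conjunct2, THEN conjunct2, THEN conjunct2] SbL] by simp
    have qL: "(\<lambda>x. \<bar>d x\<bar> * d x) \<in> Lp (3/2) \<Omega>"
    proof -
      have "(\<lambda>x. \<bar>\<bar>d x\<bar> * d x\<bar> powr (3/2)) = (\<lambda>x. \<bar>d x\<bar>^3)"
      proof
        fix x
        have "\<bar>\<bar>d x\<bar> * d x\<bar> powr (3/2) = \<bar>d x\<bar>^2 * sqrt (\<bar>d x\<bar>^2)"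
          by (simp add: powr32 abs_mult power2_eq_square)
        then show "\<bar>\<bar>d x\<bar> * d x\<bar> powr (3/2) = \<bar>d x\<bar>^3" using sq_sqrt_abs by simp
      qed
      then show ?thesis unfolding Lp_def SB SI using id3 by simp
    qed
    have e4: "integral\<^sup>L N (\<lambda>x. \<phi> x * \<gamma> x / dt * sroot (s x) * (\<bar>d x\<bar> * d x))
          + integral\<^sup>L N (\<lambda>x. d x * (\<bar>d x\<bar> * d x)) = integral\<^sup>L N (\<lambda>x. g x * (\<bar>d x\<bar> * d x))"
      using bspec[OF solE[THEN conjunct2, THEN conjunct2, THEN conjunct2] qL] by simp
    define A where "A = integral\<^sup>L N (\<lambda>x. norm (mm x)^3)"
    define B where "B = integral\<^sup>L N (\<lambda>x. \<bar>s x\<bar> * sqrt \<bar>s x\<bar>)"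
    define D where "D = integral\<^sup>L N (\<lambda>x. \<bar>d x\<bar>^3)"
    have A0: "0 \<le> A" unfolding A_def by simp
    have B0: "0 \<le> B" unfolding B_def by simp
    have AE1: "AE x in N. \<bar>(\<alpha> x + \<beta> x * norm (mm x)) * (mm x \<bullet> mm x)\<bar> \<le> \<alpha>hi + (\<alpha>hi+\<beta>hi)*norm (mm x)^3
        \<and> \<beta>lo*norm (mm x)^3 \<le> (\<alpha> x + \<beta> x * norm (mm x)) * (mm x \<bullet> mm x)"
      using AEc
    proof (rule eventually_mono)
      fix x assume h: "clo \<le> \<phi> x * \<gamma> x / dt \<and> \<phi> x * \<gamma> x / dt \<le> chi \<and>
       clo \<le> \<phi> x * \<gamma>prev x / dt \<and> \<phi> x * \<gamma>prev x / dt \<le> chi \<and>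
       \<alpha>lo \<le> \<alpha> x \<and> \<alpha> x \<le> \<alpha>hi \<and> \<beta>lo \<le> \<beta> x \<and> \<beta> x \<le> \<beta>hi"
      have "mm x \<bullet> mm x = norm (mm x)^2" by (simp add: power2_norm_eq_inner)
      then show "\<bar>(\<alpha> x + \<beta> x * norm (mm x)) * (mm x \<bullet> mm x)\<bar> \<le> \<alpha>hi + (\<alpha>hi+\<beta>hi)*norm (mm x)^3
        \<and> \<beta>lo*norm (mm x)^3 \<le> (\<alpha> x + \<beta> x * norm (mm x)) * (mm x \<bullet> mm x)"
        using coef_bound[of \<alpha>lo "\<alpha> x" \<alpha>hi \<beta>lo "\<beta> x" \<beta>hi "norm (mm x)"] h assms(12,15) by simp
    qed
    have iu1: "integrable N (\<lambda>x. (\<alpha> x + \<beta> x * norm (mm x)) * (mm x \<bullet> mm x))"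
      by (rule bound_int(1)[of _ "\<lambda>x. \<alpha>hi + (\<alpha>hi+\<beta>hi)*norm (mm x)^3"])
        (use ic ia3 AE1 in \<open>auto elim: eventually_mono\<close>)
    have sI1: "\<beta>lo * A \<le> integral\<^sup>L N (\<lambda>x. (\<alpha> x + \<beta> x * norm (mm x)) * (mm x \<bullet> mm x))"
    proof -
      have "integral\<^sup>L N (\<lambda>x. \<beta>lo * norm (mm x)^3) \<le> integral\<^sup>L N (\<lambda>x. (\<alpha> x + \<beta> x * norm (mm x)) * (mm x \<bullet> mm x))"
        by (rule integral_mono_AE) (use ia3 iu1 AE1 in \<open>auto elim: eventually_mono\<close>)
      then show ?thesis unfolding A_def by simp
    qed
    have sJ: "0 \<le> \<epsilon> * integral\<^sup>L N (\<lambda>x. \<bar>d x\<bar> * d x * d x)"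
    proof -
      have "0 \<le> integral\<^sup>L N (\<lambda>x. \<bar>d x\<bar> * d x * d x)"
        by (rule Bochner_Integration.integral_nonneg) (simp add: mult.assoc)
      then show ?thesis using ep by simp
    qed
    have AEP: "AE x in N. \<bar>\<phi> x * \<gamma> x / dt * sroot (s x) * s x\<bar> \<le> chi * (\<bar>s x\<bar> * sqrt \<bar>s x\<bar>)
       \<and> clo * (\<bar>s x\<bar> * sqrt \<bar>s x\<bar>) \<le> \<phi> x * \<gamma> x / dt * sroot (s x) * s x"
      using AEc
    proof (rule eventually_mono)
      fix x assume h: "clo \<le> \<phi> x * \<gamma> x / dt \<and> \<phi> x * \<gamma> x / dt \<le> chi \<and>
       clo \<le> \<phi> x * \<gamma>prev x / dt \<and> \<phi> x * \<gamma>prev x / dt \<le> chi \<and>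
       \<alpha>lo \<le> \<alpha> x \<and> \<alpha> x \<le> \<alpha>hi \<and> \<beta>lo \<le> \<beta> x \<and> \<beta> x \<le> \<beta>hi"
      have eq: "\<phi> x * \<gamma> x / dt * sroot (s x) * s x = (\<phi> x * \<gamma> x / dt) * (\<bar>s x\<bar> * sqrt \<bar>s x\<bar>)"
        by (simp only: mult.assoc sroot_mult)
      have nn: "0 \<le> \<bar>s x\<bar> * sqrt \<bar>s x\<bar>" by simp
      have c0: "0 \<le> \<phi> x * \<gamma> x / dt" using h clo_pos by linarith
      show "\<bar>\<phi> x * \<gamma> x / dt * sroot (s x) * s x\<bar> \<le> chi * (\<bar>s x\<bar> * sqrt \<bar>s x\<bar>)
       \<and> clo * (\<bar>s x\<bar> * sqrt \<bar>s x\<bar>) \<le> \<phi> x * \<gamma> x / dt * sroot (s x) * s x"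
        unfolding eq by (rule cw_bound) (use h c0 nn in auto)
    qed
    have mP1: "(\<lambda>x. \<phi> x * \<gamma> x / dt * sroot (s x) * s x) \<in> borel_measurable N"
      unfolding sroot_eq by measurable
    have iuP: "integrable N (\<lambda>x. \<phi> x * \<gamma> x / dt * sroot (s x) * s x)"
      by (rule bound_int(1)[OF _ mP1, of "\<lambda>x. chi * (\<bar>s x\<bar> * sqrt \<bar>s x\<bar>)"])
        (use is32 AEP in \<open>auto elim: eventually_mono\<close>)
    have sP: "clo * B \<le> integral\<^sup>L N (\<lambda>x. \<phi> x * \<gamma> x / dt * sroot (s x) * s x)"
    proof -
      have "integral\<^sup>L N (\<lambda>x. clo * (\<bar>s x\<bar> * sqrt \<bar>s x\<bar>)) \<le> integral\<^sup>L N (\<lambda>x. \<phi> x * \<gamma> x / dt * sroot (s x) * s x)"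
        by (rule integral_mono_AE) (use is32 iuP AEP in \<open>auto elim: eventually_mono\<close>)
      then show ?thesis unfolding B_def by simp
    qed
    have sQ: "integral\<^sup>L N (\<lambda>x. g x * s x) \<le> l1 * B + G3 / l1^2"
    proof -
      have "integral\<^sup>L N (\<lambda>x. g x * s x) \<le> integral\<^sup>L N (\<lambda>x. l1 * (\<bar>s x\<bar> * sqrt \<bar>s x\<bar>) + \<bar>g x\<bar>^3 / l1^2)"
      proof (rule bound_int(2))
        show "integrable N (\<lambda>x. l1 * (\<bar>s x\<bar> * sqrt \<bar>s x\<bar>) + \<bar>g x\<bar>^3 / l1^2)" using is32 ig3 by auto
        show "(\<lambda>x. g x * s x) \<in> borel_measurable N" by measurable
        show "AE x in N. \<bar>g x * s x\<bar> \<le> l1 * (\<bar>s x\<bar> * sqrt \<bar>s x\<bar>) + \<bar>g x\<bar>^3 / l1^2"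
          by (intro AE_I2) (use young1[OF abs_ge_zero abs_ge_zero l1p] in \<open>simp add: abs_mult\<close>)
      qed
      also have "\<dots> = l1 * B + G3 / l1^2" using is32 ig3 unfolding B_def G3_def by simp
      finally show ?thesis .
    qed
    have sY: "- integral\<^sup>L N (\<lambda>x. mm x \<bullet> h x) \<le> l2 * H + A / l2^2"
    proof -
      have "- integral\<^sup>L N (\<lambda>x. mm x \<bullet> h x) \<le> integral\<^sup>L N (\<lambda>x. l2 * (norm (h x) * sqrt (norm (h x))) + norm (mm x)^3 / l2^2)"
      proof (rule bound_int(3))
        show "integrable N (\<lambda>x. l2 * (norm (h x) * sqrt (norm (h x))) + norm (mm x)^3 / l2^2)" using ih ia3 by auto
        show "(\<lambda>x. mm x \<bullet> h x) \<in> borel_measurable N" by measurable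
        show "AE x in N. \<bar>mm x \<bullet> h x\<bar> \<le> l2 * (norm (h x) * sqrt (norm (h x))) + norm (mm x)^3 / l2^2"
        proof (intro AE_I2)
          fix x
          have "\<bar>mm x \<bullet> h x\<bar> \<le> norm (mm x) * norm (h x)" by (rule Cauchy_Schwarz_ineq2)
          also have "\<dots> \<le> l2 * (norm (h x) * sqrt (norm (h x))) + norm (mm x)^3 / l2^2"
            by (rule young1[OF norm_ge_zero norm_ge_zero l2p])
          finally show "\<bar>mm x \<bullet> h x\<bar> \<le> l2 * (norm (h x) * sqrt (norm (h x))) + norm (mm x)^3 / l2^2" .
        qed
      qed
      also have "\<dots> = l2 * H + A / l2^2" using ih ia3 unfolding H_def A_def by simp
      finally show ?thesis .
    qed
    have sT: "- integral\<^sup>L N (\<lambda>x. g x * Sb x) \<le> GG + G3"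
    proof -
      have "- integral\<^sup>L N (\<lambda>x. g x * Sb x) \<le> integral\<^sup>L N (\<lambda>x. (\<bar>Sb x\<bar> * sqrt \<bar>Sb x\<bar>) + \<bar>g x\<bar>^3)"
      proof (rule bound_int(3))
        show "integrable N (\<lambda>x. (\<bar>Sb x\<bar> * sqrt \<bar>Sb x\<bar>) + \<bar>g x\<bar>^3)" using iG ig3 by auto
        show "(\<lambda>x. g x * Sb x) \<in> borel_measurable N" by measurable
        show "AE x in N. \<bar>g x * Sb x\<bar> \<le> (\<bar>Sb x\<bar> * sqrt \<bar>Sb x\<bar>) + \<bar>g x\<bar>^3"
          by (intro AE_I2) (use young1[OF abs_ge_zero abs_ge_zero zero_less_one] in \<open>simp add: abs_mult\<close>)
      qed
      also have "\<dots> = GG + G3" using iG ig3 unfolding GG_def G3_def by simp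
      finally show ?thesis .
    qed
    have sR: "integral\<^sup>L N (\<lambda>x. \<phi> x * \<gamma> x / dt * sroot (s x) * Sb x) \<le> chi * l3 * GG + chi / l3^2 * B"
    proof -
      have "integral\<^sup>L N (\<lambda>x. \<phi> x * \<gamma> x / dt * sroot (s x) * Sb x) \<le>
          integral\<^sup>L N (\<lambda>x. chi * l3 * (\<bar>Sb x\<bar> * sqrt \<bar>Sb x\<bar>) + chi / l3^2 * (\<bar>s x\<bar> * sqrt \<bar>s x\<bar>))"
      proof (rule bound_int(2))
        show "integrable N (\<lambda>x. chi * l3 * (\<bar>Sb x\<bar> * sqrt \<bar>Sb x\<bar>) + chi / l3^2 * (\<bar>s x\<bar> * sqrt \<bar>s x\<bar>))"
          using iG is32 by auto
        show "(\<lambda>x. \<phi> x * \<gamma> x / dt * sroot (s x) * Sb x) \<in> borel_measurable N"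
          unfolding sroot_eq by measurable
        show "AE x in N. \<bar>\<phi> x * \<gamma> x / dt * sroot (s x) * Sb x\<bar> \<le>
            chi * l3 * (\<bar>Sb x\<bar> * sqrt \<bar>Sb x\<bar>) + chi / l3^2 * (\<bar>s x\<bar> * sqrt \<bar>s x\<bar>)"
          using AEc
        proof (rule eventually_mono)
          fix x assume h: "clo \<le> \<phi> x * \<gamma> x / dt \<and> \<phi> x * \<gamma> x / dt \<le> chi \<and>
           clo \<le> \<phi> x * \<gamma>prev x / dt \<and> \<phi> x * \<gamma>prev x / dt \<le> chi \<and>
           \<alpha>lo \<le> \<alpha> x \<and> \<alpha> x \<le> \<alpha>hi \<and> \<beta>lo \<le> \<beta> x \<and> \<beta> x \<le> \<beta>hi"
          have c0: "0 \<le> \<phi> x * \<gamma> x / dt" using h clo_pos by linarith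
          have "\<bar>\<phi> x * \<gamma> x / dt * sroot (s x) * Sb x\<bar> = (\<phi> x * \<gamma> x / dt) * (sqrt \<bar>s x\<bar> * \<bar>Sb x\<bar>)"
            by (simp only: abs_mult sroot_abs abs_of_nonneg[OF c0] mult.assoc)
          also have "\<dots> \<le> chi * (sqrt \<bar>s x\<bar> * \<bar>Sb x\<bar>)" using h by (intro mult_right_mono) auto
          also have "\<dots> \<le> chi * (l3 * (\<bar>Sb x\<bar> * sqrt \<bar>Sb x\<bar>) + (sqrt \<bar>s x\<bar>)^3 / l3^2)"
            using chi_pos by (intro mult_left_mono young1 l3p) auto
          also have "\<dots> = chi * l3 * (\<bar>Sb x\<bar> * sqrt \<bar>Sb x\<bar>) + chi / l3^2 * (\<bar>s x\<bar> * sqrt \<bar>s x\<bar>)"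
            by (simp add: sqrt_cube algebra_simps)
          finally show "\<bar>\<phi> x * \<gamma> x / dt * sroot (s x) * Sb x\<bar> \<le>
            chi * l3 * (\<bar>Sb x\<bar> * sqrt \<bar>Sb x\<bar>) + chi / l3^2 * (\<bar>s x\<bar> * sqrt \<bar>s x\<bar>)" .
        qed
      qed
      also have "\<dots> = chi * l3 * GG + chi / l3^2 * B" using iG is32 unfolding GG_def B_def by simp
      finally show ?thesis .
    qed
    have comb: "integral\<^sup>L N (\<lambda>x. (\<alpha> x + \<beta> x * norm (mm x)) * (mm x \<bullet> mm x))
          + \<epsilon> * integral\<^sup>L N (\<lambda>x. \<bar>d x\<bar> * d x * d x)
          + integral\<^sup>L N (\<lambda>x. \<phi> x * \<gamma> x / dt * sroot (s x) * s x)
        = integral\<^sup>L N (\<lambda>x. g x * s x) - integral\<^sup>L N (\<lambda>x. mm x \<bullet> h x)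
          - integral\<^sup>L N (\<lambda>x. g x * Sb x) + integral\<^sup>L N (\<lambda>x. \<phi> x * \<gamma> x / dt * sroot (s x) * Sb x)"
      using e1 e2 e3 by linarith
    have main: "\<beta>lo * A + clo * B \<le> K0 + l1 * B + A / l2^2 + chi / l3^2 * B"
      using comb sI1 sJ sP sQ sY sT sR unfolding K0_def by linarith
    have inv1: "1 / l2^2 \<le> \<beta>lo / 2"
      using inv_sq[of l2 "2 / \<beta>lo"] assms(15) unfolding l2_def by simp
    have inv2: "chi / l3^2 \<le> clo / 4"
    proof -
      have "1 / l3^2 \<le> 1 / (4 * chi / clo)"
        using inv_sq[of l3 "4 * chi / clo"] chi_pos clo_pos unfolding l3_def by simp
      then have "chi * (1 / l3^2) \<le> chi * (1 / (4 * chi / clo))" using chi_pos by (intro mult_left_mono) auto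
      also have "\<dots> = clo / 4" using chi_pos clo_pos by (simp add: field_simps)
      finally show ?thesis by simp
    qed
    have "A / l2^2 \<le> \<beta>lo / 2 * A" using mult_left_mono[OF inv1 A0] by (simp add: mult.commute)
    moreover have "chi / l3^2 * B \<le> clo / 4 * B" using mult_right_mono[OF inv2 B0] .
    ultimately have main2: "\<beta>lo / 2 * A + clo / 2 * B \<le> K0" using main unfolding l1_def by linarith
    have cB: "clo / 2 * B \<ge> 0" and cA: "\<beta>lo / 2 * A \<ge> 0" using A0 B0 clo_pos assms(15) by auto
    have boundA: "A \<le> KA"
    proof -
      have "\<beta>lo / 2 * A \<le> K0" using main2 cB by linarith
      then show ?thesis unfolding KA_def using assms(15) by (simp add: field_simps)
    qed
    have boundB: "B \<le> KB"
    proof -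
      have "clo / 2 * B \<le> K0" using main2 cA by linarith
      then show ?thesis unfolding KB_def using clo_pos by (simp add: field_simps)
    qed
    have sD4: "integral\<^sup>L N (\<lambda>x. d x * (\<bar>d x\<bar> * d x)) = D" unfolding D_def by (simp only: cube_abs)
    have sT4: "integral\<^sup>L N (\<lambda>x. g x * (\<bar>d x\<bar> * d x)) \<le> 1/4 * D + 16 * G3"
    proof -
      have "integral\<^sup>L N (\<lambda>x. g x * (\<bar>d x\<bar> * d x)) \<le> integral\<^sup>L N (\<lambda>x. 1/4 * \<bar>d x\<bar>^3 + 16 * \<bar>g x\<bar>^3)"
      proof (rule bound_int(2))
        show "integrable N (\<lambda>x. 1/4 * \<bar>d x\<bar>^3 + 16 * \<bar>g x\<bar>^3)" using id3 ig3 by auto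
        show "(\<lambda>x. g x * (\<bar>d x\<bar> * d x)) \<in> borel_measurable N" by measurable
        show "AE x in N. \<bar>g x * (\<bar>d x\<bar> * d x)\<bar> \<le> 1/4 * \<bar>d x\<bar>^3 + 16 * \<bar>g x\<bar>^3"
        proof (intro AE_I2)
          fix x
          have "\<bar>g x * (\<bar>d x\<bar> * d x)\<bar> = \<bar>g x\<bar> * \<bar>d x\<bar>^2" by (simp add: abs_mult power2_eq_square)
          also have "\<dots> \<le> 1/4 * (\<bar>d x\<bar>^2 * sqrt (\<bar>d x\<bar>^2)) + \<bar>g x\<bar>^3 / (1/4)^2"
            by (rule young1) auto
          also have "\<dots> = 1/4 * \<bar>d x\<bar>^3 + 16 * \<bar>g x\<bar>^3" by (simp only: sq_sqrt_abs) (simp add: power2_eq_square)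
          finally show "\<bar>g x * (\<bar>d x\<bar> * d x)\<bar> \<le> 1/4 * \<bar>d x\<bar>^3 + 16 * \<bar>g x\<bar>^3" .
        qed
      qed
      also have "\<dots> = 1/4 * D + 16 * G3" using id3 ig3 unfolding D_def G3_def by simp
      finally show ?thesis .
    qed
    have sR4: "- integral\<^sup>L N (\<lambda>x. \<phi> x * \<gamma> x / dt * sroot (s x) * (\<bar>d x\<bar> * d x)) \<le> chi * mu * D + chi / mu^2 * B"
    proof -
      have "- integral\<^sup>L N (\<lambda>x. \<phi> x * \<gamma> x / dt * sroot (s x) * (\<bar>d x\<bar> * d x)) \<le>
          integral\<^sup>L N (\<lambda>x. chi * mu * \<bar>d x\<bar>^3 + chi / mu^2 * (\<bar>s x\<bar> * sqrt \<bar>s x\<bar>))"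
      proof (rule bound_int(3))
        show "integrable N (\<lambda>x. chi * mu * \<bar>d x\<bar>^3 + chi / mu^2 * (\<bar>s x\<bar> * sqrt \<bar>s x\<bar>))"
          using id3 is32 by auto
        show "(\<lambda>x. \<phi> x * \<gamma> x / dt * sroot (s x) * (\<bar>d x\<bar> * d x)) \<in> borel_measurable N"
          unfolding sroot_eq by measurable
        show "AE x in N. \<bar>\<phi> x * \<gamma> x / dt * sroot (s x) * (\<bar>d x\<bar> * d x)\<bar> \<le>
            chi * mu * \<bar>d x\<bar>^3 + chi / mu^2 * (\<bar>s x\<bar> * sqrt \<bar>s x\<bar>)"
          using AEc
        proof (rule eventually_mono)
          fix x assume h: "clo \<le> \<phi> x * \<gamma> x / dt \<and> \<phi> x * \<gamma> x / dt \<le> chi \<and>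
           clo \<le> \<phi> x * \<gamma>prev x / dt \<and> \<phi> x * \<gamma>prev x / dt \<le> chi \<and>
           \<alpha>lo \<le> \<alpha> x \<and> \<alpha> x \<le> \<alpha>hi \<and> \<beta>lo \<le> \<beta> x \<and> \<beta> x \<le> \<beta>hi"
          have c0: "0 \<le> \<phi> x * \<gamma> x / dt" using h clo_pos by linarith
          have "\<bar>\<phi> x * \<gamma> x / dt * sroot (s x) * (\<bar>d x\<bar> * d x)\<bar> = (\<phi> x * \<gamma> x / dt) * (sqrt \<bar>s x\<bar> * \<bar>d x\<bar>^2)"
            by (simp only: abs_mult sroot_abs abs_of_nonneg[OF c0] abs_abs mult.assoc power2_eq_square)
          also have "\<dots> \<le> chi * (sqrt \<bar>s x\<bar> * \<bar>d x\<bar>^2)" using h by (intro mult_right_mono) auto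
          also have "\<dots> \<le> chi * (mu * (\<bar>d x\<bar>^2 * sqrt (\<bar>d x\<bar>^2)) + (sqrt \<bar>s x\<bar>)^3 / mu^2)"
            using chi_pos by (intro mult_left_mono young1 mup) auto
          also have "\<dots> = chi * mu * \<bar>d x\<bar>^3 + chi / mu^2 * (\<bar>s x\<bar> * sqrt \<bar>s x\<bar>)"
            by (simp only: sq_sqrt_abs sqrt_cube[OF abs_ge_zero]) (simp add: algebra_simps)
          finally show "\<bar>\<phi> x * \<gamma> x / dt * sroot (s x) * (\<bar>d x\<bar> * d x)\<bar> \<le>
            chi * mu * \<bar>d x\<bar>^3 + chi / mu^2 * (\<bar>s x\<bar> * sqrt \<bar>s x\<bar>)" .
        qed
      qed
      also have "\<dots> = chi * mu * D + chi / mu^2 * B" using id3 is32 unfolding D_def B_def by simp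
      finally show ?thesis .
    qed
    have cmu: "chi * mu \<le> 1/4" unfolding mu_def using chi_pos by (simp add: field_simps)
    have D0: "0 \<le> D" unfolding D_def by simp
    have "chi * mu * D \<le> 1/4 * D" using mult_right_mono[OF cmu D0] .
    moreover have "chi / mu^2 * B \<le> chi / mu^2 * KB" using boundB chi_pos mup by (intro mult_left_mono) auto
    ultimately have "D \<le> 1/4 * D + 16 * G3 + 1/4 * D + chi / mu^2 * KB"
      using e4 sD4 sT4 sR4 by linarith
    then have "D \<le> 2 * (16 * G3) + 2 * (chi / mu^2 * KB)" by linarith
    then have boundD: "D \<le> KD" unfolding KD_def by (simp only: distrib_left)
    show ?thesis using boundA boundB boundD unfolding A_def B_def D_def mm_def s_def d_def by simp
  qed
  show ?thesis
  proof (intro exI allI impI conjI)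
    fix \<epsilon> :: real assume ep: "\<epsilon> > 0"
    have k: "integral\<^sup>L N (\<lambda>x. norm (m \<epsilon> x)^3) \<le> KA \<and>
      integral\<^sup>L N (\<lambda>x. \<bar>S \<epsilon> x\<bar> * sqrt \<bar>S \<epsilon> x\<bar>) \<le> KB \<and>
      integral\<^sup>L N (\<lambda>x. \<bar>wdiv \<Omega> (m \<epsilon>) x\<bar>^3) \<le> KD" using key[OF ep] .
    have nA: "0 \<le> integral\<^sup>L N (\<lambda>x. norm (m \<epsilon> x)^3)"
      by (rule Bochner_Integration.integral_nonneg) simp
    have nD: "0 \<le> integral\<^sup>L N (\<lambda>x. \<bar>wdiv \<Omega> (m \<epsilon>) x\<bar>^3)"
      by (rule Bochner_Integration.integral_nonneg) simp
    have nB: "0 \<le> integral\<^sup>L N (\<lambda>x. \<bar>S \<epsilon> x\<bar> * sqrt \<bar>S \<epsilon> x\<bar>)"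
      by (rule Bochner_Integration.integral_nonneg) simp
    have "Wdiv3_norm \<Omega> (m \<epsilon>) = (integral\<^sup>L N (\<lambda>x. norm (m \<epsilon> x)^3) + integral\<^sup>L N (\<lambda>x. \<bar>wdiv \<Omega> (m \<epsilon>) x\<bar>^3)) powr (1/3)"
      unfolding Wdiv3_norm_def LI powr3n powr3 ..
    also have "\<dots> \<le> (KA + KD) powr (1/3)"
      by (rule powr_mono2) (use k nA nD in linarith)+
    finally show "Wdiv3_norm \<Omega> (m \<epsilon>) \<le> (KA + KD) powr (1/3)" .
    have eqS: "(\<lambda>x. \<bar>S \<epsilon> x\<bar> powr (3/2)) = (\<lambda>x. \<bar>S \<epsilon> x\<bar> * sqrt \<bar>S \<epsilon> x\<bar>)"
      by (rule ext, rule powr32, rule abs_ge_zero)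
    have "Lp_norm (3/2) \<Omega> (S \<epsilon>) = (integral\<^sup>L N (\<lambda>x. \<bar>S \<epsilon> x\<bar> * sqrt \<bar>S \<epsilon> x\<bar>)) powr (1 / (3/2))"
      unfolding Lp_norm_def LI eqS ..
    also have "\<dots> \<le> KB powr (1 / (3/2))"
      by (rule powr_mono2) (use k nB in auto)
    finally show "Lp_norm (3/2) \<Omega> (S \<epsilon>) \<le> KB powr (1 / (3/2))" .
  qed
qed

end
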